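(* Let $X$ be a homogeneous space with the Baire property and $\chi(X)\le\aleph_0$. If there is a continuous transitive action of an $\omega$-narrow group on $X$, then $X$ is separable and metrizable.
   Context: All spaces are Tychonoff. $X$ is homogeneous if for any $x,y\in X$ there is a homeomorphism $h$ of $X$ with $h(x)=y$. A topological group $G$ is $\omega$-narrow if for every neighborhood $U$ of the unit there is a countable $A\subset G$ with $AU=G$. *)

theory Defs
  imports "HOL-Analysis.Analysis" "HOL-Algebra.Group" "HOL-Algebra.Coset"
begin

text \<open>Tychonoff space: completely regular and T1 (here Hausdorff, equivalent under complete regularity).\<close>
definition tychonoff_space :: "'a topology \<Rightarrow> bool" where
  "tychonoff_space X \<longleftrightarrow> completely_regular_space X \<and> Hausdorff_space X"

definition homogeneous_space :: "'a topology \<Rightarrow> bool" where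
  "homogeneous_space X \<longleftrightarrow>
     (\<forall>x\<in>topspace X. \<forall>y\<in>topspace X. \<exists>h. homeomorphic_map X X h \<and> h x = y)"

definition baire_space :: "'a topology \<Rightarrow> bool" where
  "baire_space X \<longleftrightarrow>
     (\<forall>\<U>. countable \<U> \<and> (\<forall>U\<in>\<U>. openin X U \<and> X closure_of U = topspace X)
        \<longrightarrow> X closure_of (topspace X \<inter> \<Inter>\<U>) = topspace X)"

definition topological_group :: "('g, 'm) monoid_scheme \<Rightarrow> 'g topology \<Rightarrow> bool" where
  "topological_group G T \<longleftrightarrow>
     group G \<and> topspace T = carrier G \<and>
     continuous_map (prod_topology T T) T (\<lambda>(x, y). x \<otimes>\<^bsub>G\<^esub> y) \<and>
     continuous_map T T (\<lambda>x. inv\<^bsub>G\<^esub> x)"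

definition omega_narrow :: "('g, 'm) monoid_scheme \<Rightarrow> 'g topology \<Rightarrow> bool" where
  "omega_narrow G T \<longleftrightarrow>
     (\<forall>U. openin T U \<and> \<one>\<^bsub>G\<^esub> \<in> U \<longrightarrow>
        (\<exists>A. countable A \<and> A \<subseteq> carrier G \<and> A <#>\<^bsub>G\<^esub> U = carrier G))"

definition continuous_action ::
  "('g, 'm) monoid_scheme \<Rightarrow> 'g topology \<Rightarrow> 'a topology \<Rightarrow> ('g \<Rightarrow> 'a \<Rightarrow> 'a) \<Rightarrow> bool" where
  "continuous_action G T X act \<longleftrightarrow>
     (\<forall>g\<in>carrier G. \<forall>x\<in>topspace X. act g x \<in> topspace X) \<and>
     (\<forall>x\<in>topspace X. act \<one>\<^bsub>G\<^esub> x = x) \<and>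
     (\<forall>g\<in>carrier G. \<forall>h\<in>carrier G. \<forall>x\<in>topspace X.
        act (g \<otimes>\<^bsub>G\<^esub> h) x = act g (act h x)) \<and>
     continuous_map (prod_topology T X) X (\<lambda>(g, x). act g x)"

definition transitive_action ::
  "('g, 'm) monoid_scheme \<Rightarrow> 'a topology \<Rightarrow> ('g \<Rightarrow> 'a \<Rightarrow> 'a) \<Rightarrow> bool" where
  "transitive_action G X act \<longleftrightarrow>
     (\<forall>x\<in>topspace X. \<forall>y\<in>topspace X. \<exists>g\<in>carrier G. act g x = y)"

end

theory Submission
  imports Defs
begin


lemma embedding_by_family:
  fixes f :: "'k \<Rightarrow> 'a \<Rightarrow> real"
  assumes contf: "\<And>p. p\<in>K \<Longrightarrow> continuous_map X (top_of_set {0..1}) (f p)"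
    and sep: "\<And>U x. openin X U \<Longrightarrow> x\<in>U \<Longrightarrow> (\<exists>p\<in>K. f p x = 0 \<and> (\<forall>y\<in>topspace X - U. f p y = 1))"
    and H: "Hausdorff_space X"
  shows "embedding_map X (product_topology (\<lambda>_. top_of_set {0..1::real}) K) (\<lambda>x. \<lambda>p\<in>K. f p x)"
proof -
  define e where "e \<equiv> \<lambda>x. \<lambda>p\<in>K. f p x"
  have "e x \<noteq> e y" if xy: "x \<noteq> y" "x \<in> topspace X" "y \<in> topspace X" for x y
  proof -
    have "closedin X {y}"
      by (simp add: H closedin_Hausdorff_singleton \<open>y \<in> topspace X\<close>)
    then have "openin X (topspace X - {y})" by blast
    then obtain p where "p \<in> K" "f p x = 0" "f p y = 1"
      using sep[of "topspace X - {y}" x] xy by auto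
    then show ?thesis unfolding e_def
      by (metis restrict_apply' zero_neq_one)
  qed
  then have "inj_on e (topspace X)"
    by (meson inj_onI)
  then obtain e' where e': "\<And>x. x \<in> topspace X \<Longrightarrow> e' (e x) = x"
    by (metis inv_into_f_f)
  have "continuous_map (subtopology (product_topology (\<lambda>_. top_of_set {0..1}) K) (e ` topspace X)) X e'"
  proof (clarsimp simp add: continuous_map_atin limitin_atin openin_subtopology_alt e')
    fix x U
    assume "e x \<in> K \<rightarrow>\<^sub>E {0..1}" and "x \<in> topspace X" and "openin X U" and "x \<in> U"
    then obtain q where qK: "q \<in> K" and "f q x = 0" and gim: "\<forall>y\<in>topspace X - U. f q y = 1"
      using sep by blast
    have "openin (top_of_set {0..1}) {0..<1::real}"
      using open_real_greaterThanLessThan[of "-1" 1] by (force simp: openin_open)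
    moreover have "e x \<in> (\<Pi>\<^sub>E p\<in>K. if p = q then {0..<1} else {0..1})"
      using \<open>e x \<in> K \<rightarrow>\<^sub>E {0..1}\<close> by (simp add: e_def \<open>f q x = 0\<close> \<open>x \<in> topspace X\<close> PiE_iff)
    moreover have "e y = e x"
      if "y \<notin> U" and ey: "e y \<in> (\<Pi>\<^sub>E p\<in>K. if p = q then {0..<1} else {0..1})"
           and y: "y \<in> topspace X" for y
    proof -
      have "e y q \<in> {0..<1}"
        using ey by (smt (verit, ccfv_SIG) PiE_mem qK)
      with gim qK y \<open>y \<notin> U\<close> show ?thesis
        by (fastforce simp: e_def)
    qed
    ultimately
    show "\<exists>W. openin (product_topology (\<lambda>_. top_of_set {0..1}) K) W \<and> e x \<in> W \<and> e' ` (e ` topspace X \<inter> W - {e x}) \<subseteq> U"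
      apply (rule_tac x="PiE K (\<lambda>p. if p = q then {0..<1} else {0..1})" in exI)
      by (auto simp: openin_PiE_gen e')
  qed
  moreover have "continuous_map X (product_topology (\<lambda>_. top_of_set {0..1}) K) e"
    unfolding e_def using contf
    by (auto simp: continuous_map_componentwise)
  ultimately have "homeomorphic_maps X (subtopology (product_topology (\<lambda>_. top_of_set {0..1}) K) (e ` topspace X)) e e'"
    unfolding homeomorphic_maps_def
    using e' by (auto simp: continuous_map_in_subtopology)
  then have "embedding_map X (product_topology (\<lambda>_. top_of_set {0..1}) K) e"
    unfolding embedding_map_def homeomorphic_map_maps by blast
  then show ?thesis
    by (simp add: e_def)
qed

lemma regular_second_countable_metrizable:
  assumes R: "regular_space X" and H: "Hausdorff_space X" and S: "second_countable X"
  shows "metrizable_space X"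
proof -
  have "hereditarily normal_space X"
    using regular_second_countable_imp_hereditarily_normal_space R S by blast
  then have "normal_space (subtopology X (topspace X))"
    unfolding hereditarily_def by blast
  then have N: "normal_space X" by simp
  obtain \<B> :: "'a set set" where B0: "countable \<B> \<and> (\<forall>V \<in> \<B>. openin X V) \<and>
             (\<forall>U x. openin X U \<and> x \<in> U \<longrightarrow> (\<exists>V \<in> \<B>. x \<in> V \<and> V \<subseteq> U))"
    using S unfolding second_countable_def by (elim exE) (rule that)
  have Bc: "countable \<B>" using B0 by simp
  have Bo: "\<And>V. V \<in> \<B> \<Longrightarrow> openin X V" using B0 by simp
  have Bb: "\<And>U x. openin X U \<Longrightarrow> x \<in> U \<Longrightarrow> \<exists>V \<in> \<B>. x \<in> V \<and> V \<subseteq> U"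
    using B0 by simp
  define K where "K = {(B,B'). B \<in> \<B> \<and> B' \<in> \<B> \<and> X closure_of B \<subseteq> B'}"
  have Kc: "countable K"
  proof -
    have "K \<subseteq> \<B> \<times> \<B>" unfolding K_def by blast
    then show ?thesis using Bc by (meson countable_SIGMA countable_subset)
  qed
  have "\<forall>p\<in>K. \<exists>g. continuous_map X (top_of_set {0..1::real}) g \<and> g ` (X closure_of fst p) \<subseteq> {0}
            \<and> g ` (topspace X - snd p) \<subseteq> {1}"
  proof
    fix p assume "p \<in> K"
    obtain B B' where p: "p = (B,B')" "B \<in> \<B>" "B' \<in> \<B>" "X closure_of B \<subseteq> B'"
      using \<open>p \<in> K\<close> by (auto simp: K_def)
    have "closedin X (topspace X - B')" by (intro closedin_diff closedin_topspace Bo p(3))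
    moreover have "disjnt (X closure_of B) (topspace X - B')" using p(4) by (auto simp: disjnt_def)
    ultimately obtain g where "continuous_map X (top_of_set {0..1::real}) g" "g ` (X closure_of B) \<subseteq> {0}"
        "g ` (topspace X - B') \<subseteq> {1::real}"
      using Urysohn_lemma[OF N, of "X closure_of B" "topspace X - B'" 0 1] by auto
    then show "\<exists>g. continuous_map X (top_of_set {0..1::real}) g \<and> g ` (X closure_of fst p) \<subseteq> {0}
            \<and> g ` (topspace X - snd p) \<subseteq> {1}" using p by auto
  qed
  then have "\<exists>f. \<forall>p\<in>K. continuous_map X (top_of_set {0..1::real}) (f p) \<and> f p ` (X closure_of fst p) \<subseteq> {0}
            \<and> f p ` (topspace X - snd p) \<subseteq> {1}"
    by (rule bchoice)
  then obtain f where f0: "\<forall>p\<in>K. continuous_map X (top_of_set {0..1::real}) (f p) \<and> f p ` (X closure_of fst p) \<subseteq> {0}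
            \<and> f p ` (topspace X - snd p) \<subseteq> {1}"
    by (elim exE)
  have f: "\<And>p. p \<in> K \<Longrightarrow> continuous_map X (top_of_set {0..1::real}) (f p) \<and> f p ` (X closure_of fst p) \<subseteq> {0}
            \<and> f p ` (topspace X - snd p) \<subseteq> {1}"
    using f0 by (elim ballE) auto
  have sep: "\<exists>p\<in>K. f p x = 0 \<and> (\<forall>y\<in>topspace X - U. f p y = 1)" if U: "openin X U" "x \<in> U" for U x
  proof -
    obtain B' where B': "B' \<in> \<B>" "x \<in> B'" "B' \<subseteq> U" using Bb U by blast
    have "closedin X (topspace X - B')" by (intro closedin_diff closedin_topspace Bo B'(1))
    moreover have "x \<in> topspace X - (topspace X - B')" using B' Bo[OF B'(1), THEN openin_subset] by blast
    ultimately obtain W where W: "openin X W" "x \<in> W" "disjnt (topspace X - B') (X closure_of W)"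
      using R unfolding regular_space by (metis (no_types, lifting))
    obtain B where B: "B \<in> \<B>" "x \<in> B" "B \<subseteq> W" using Bb W by blast
    have "X closure_of B \<subseteq> X closure_of W" by (simp add: B(3) closure_of_mono)
    also have "\<dots> \<subseteq> B'"
    proof
      fix z assume "z \<in> X closure_of W"
      then have "z \<in> topspace X" using closure_of_subset_topspace[of X W] by blast
      with \<open>z \<in> X closure_of W\<close> W(3) show "z \<in> B'" by (auto simp: disjnt_def)
    qed
    finally have pK: "(B,B') \<in> K" using B B' by (auto simp: K_def)
    have "B \<subseteq> topspace X" using Bo[OF B(1)] by (rule openin_subset)
    then have "x \<in> X closure_of B" using B(2) closure_of_subset[of B X] by blast
    then have "f (B,B') x = 0" using f[OF pK] by auto
    moreover have "\<forall>y\<in>topspace X - U. f (B,B') y = 1" using f[OF pK] B' by (auto simp: image_subset_iff)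
    ultimately show ?thesis using pK by blast
  qed
  have E: "embedding_map X (product_topology (\<lambda>_. top_of_set {0..1::real}) K) (\<lambda>x. \<lambda>p\<in>K. f p x)"
  proof (rule embedding_by_family)
    show "\<And>p. p \<in> K \<Longrightarrow> continuous_map X (top_of_set {0..1::real}) (f p)" using f by blast
    show "\<And>U x. openin X U \<Longrightarrow> x \<in> U \<Longrightarrow> \<exists>p\<in>K. f p x = 0 \<and> (\<forall>y\<in>topspace X - U. f p y = 1)"
      using sep by blast
  qed (rule H)
  have "metrizable_space (product_topology (\<lambda>_. top_of_set {0..1::real}) K)"
  proof (rule metrizable_topology_D)
    show "topspace (product_topology (\<lambda>_. top_of_set {0..1::real}) K) \<noteq> {}"
      by (auto simp: PiE_eq_empty_iff)
    show "countable {i \<in> K. \<nexists>a. topspace (top_of_set {0..1::real}) \<subseteq> {a}}"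
      using Kc by (rule countable_subset[rotated]) auto
    show "metrizable_space (top_of_set {0..1::real})"
      by (simp add: metrizable_space_subtopology metrizable_space_euclidean)
  qed
  then have "metrizable_space (subtopology (product_topology (\<lambda>_. top_of_set {0..1::real}) K) ((\<lambda>x. \<lambda>p\<in>K. f p x) ` topspace X))"
    by (rule metrizable_space_subtopology)
  then show ?thesis
    using embedding_map_imp_homeomorphic_space[OF E] homeomorphic_metrizable_space by metis
qed



lemma act_cont:
  fixes G :: "('g,'m) monoid_scheme" (structure)
  assumes CA: "continuous_action G T X act" and TG: "topological_group G T"
    and g: "g \<in> carrier G"
  shows "continuous_map X X (act g)"
proof -
  have c: "continuous_map (prod_topology T X) X (\<lambda>(g, x). act g x)"
    using CA unfolding continuous_action_def by blast
  have gT: "g \<in> topspace T" using TG g unfolding topological_group_def by blast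
  have p: "continuous_map X (prod_topology T X) (\<lambda>x. (g, x))"
    by (intro continuous_map_pairedI continuous_map_id[unfolded id_def]) (simp add: gT)
  have "continuous_map X X ((\<lambda>(g, x). act g x) \<circ> (\<lambda>x. (g, x)))"
    using continuous_map_compose[OF p c] .
  then show ?thesis by (simp add: o_def)
qed

lemma act_homeo:
  fixes G :: "('g,'m) monoid_scheme" (structure)
  assumes CA: "continuous_action G T X act" and TG: "topological_group G T"
    and g: "g \<in> carrier G"
  shows "homeomorphic_map X X (act g)"
proof -
  interpret group G using TG unfolding topological_group_def by blast
  have ig: "inv g \<in> carrier G" using g by simp
  have comp: "\<And>a b x. a \<in> carrier G \<Longrightarrow> b \<in> carrier G \<Longrightarrow> x \<in> topspace X \<Longrightarrow> act (a \<otimes> b) x = act a (act b x)"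
    and one: "\<And>x. x \<in> topspace X \<Longrightarrow> act \<one> x = x"
    using CA unfolding continuous_action_def by blast+
  have "homeomorphic_maps X X (act g) (act (inv g))"
    unfolding homeomorphic_maps_def
  proof (intro conjI ballI act_cont[OF CA TG] g ig)
    fix x assume x: "x \<in> topspace X"
    show "act (inv g) (act g x) = x" using comp[OF ig g x] one[OF x] g by simp
    show "act g (act (inv g) x) = x" using comp[OF g ig x] one[OF x] g by simp
  qed
  then show ?thesis unfolding homeomorphic_map_maps by blast
qed

lemma nbhd_prod:
  assumes c: "continuous_map (prod_topology T T) T \<phi>" and N: "openin T N" and e: "\<phi> (e, e) \<in> N"
    and eT: "e \<in> topspace T"
  shows "\<exists>V. openin T V \<and> e \<in> V \<and> (\<forall>a\<in>V. \<forall>b\<in>V. \<phi> (a, b) \<in> N)"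
proof -
  have o: "openin (prod_topology T T) {z \<in> topspace (prod_topology T T). \<phi> z \<in> N}"
    by (rule openin_continuous_map_preimage[OF c N])
  have "(e, e) \<in> {z \<in> topspace (prod_topology T T). \<phi> z \<in> N}" using e eT by simp
  then have "\<exists>U V. openin T U \<and> openin T V \<and> e \<in> U \<and> e \<in> V \<and>
      U \<times> V \<subseteq> {z \<in> topspace (prod_topology T T). \<phi> z \<in> N}"
    using o[unfolded openin_prod_topology_alt, rule_format] by simp
  then obtain U V where UV: "openin T U" "openin T V" "e \<in> U" "e \<in> V"
      "U \<times> V \<subseteq> {z \<in> topspace (prod_topology T T). \<phi> z \<in> N}"
    by (elim exE conjE)
  show ?thesis
  proof (intro exI conjI ballI)
    show "openin T (U \<inter> V)" using UV by (simp add: openin_Int)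
    show "e \<in> U \<inter> V" using UV by simp
    fix a b assume "a \<in> U \<inter> V" "b \<in> U \<inter> V"
    then have "(a, b) \<in> U \<times> V" by simp
    then show "\<phi> (a, b) \<in> N" using UV(5) by blast
  qed
qed

lemma nbhd_mult:
  fixes G :: "('g,'m) monoid_scheme" (structure)
  assumes TG: "topological_group G T" and N: "openin T N" "\<one>\<^bsub>G\<^esub> \<in> N"
  shows "\<exists>V. openin T V \<and> \<one>\<^bsub>G\<^esub> \<in> V \<and> (\<forall>a\<in>V. \<forall>b\<in>V. a \<otimes>\<^bsub>G\<^esub> b \<in> N)"
proof -
  interpret group G using TG unfolding topological_group_def by blast
  have c: "continuous_map (prod_topology T T) T (\<lambda>(x, y). x \<otimes> y)"
    using TG unfolding topological_group_def by blast
  have "\<exists>V. openin T V \<and> \<one> \<in> V \<and> (\<forall>a\<in>V. \<forall>b\<in>V. (\<lambda>(x, y). x \<otimes> y) (a, b) \<in> N)"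
    by (rule nbhd_prod[OF c N(1)]) (use N TG in \<open>auto simp: topological_group_def\<close>)
  then show ?thesis by simp
qed

lemma nbhd_invmult:
  fixes G :: "('g,'m) monoid_scheme" (structure)
  assumes TG: "topological_group G T" and N: "openin T N" "\<one>\<^bsub>G\<^esub> \<in> N"
  shows "\<exists>V. openin T V \<and> \<one>\<^bsub>G\<^esub> \<in> V \<and> (\<forall>a\<in>V. \<forall>b\<in>V. inv\<^bsub>G\<^esub> a \<otimes>\<^bsub>G\<^esub> b \<in> N)"
proof -
  interpret group G using TG unfolding topological_group_def by blast
  have c: "continuous_map (prod_topology T T) T (\<lambda>(x, y). x \<otimes> y)"
    and ci: "continuous_map T T (\<lambda>x. inv x)"
    using TG unfolding topological_group_def by blast+
  have p: "continuous_map (prod_topology T T) (prod_topology T T) (\<lambda>z. (inv (fst z), snd z))"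
    by (intro continuous_map_pairedI continuous_map_snd continuous_map_compose[OF continuous_map_fst ci, unfolded o_def])
  have c2: "continuous_map (prod_topology T T) T ((\<lambda>(x, y). x \<otimes> y) \<circ> (\<lambda>z. (inv (fst z), snd z)))"
    by (rule continuous_map_compose[OF p c])
  have "\<exists>V. openin T V \<and> \<one> \<in> V \<and> (\<forall>a\<in>V. \<forall>b\<in>V. ((\<lambda>(x, y). x \<otimes> y) \<circ> (\<lambda>z. (inv (fst z), snd z))) (a, b) \<in> N)"
    by (rule nbhd_prod[OF c2 N(1)]) (use N TG in \<open>auto simp: topological_group_def\<close>)
  then show ?thesis by simp
qed


lemma effros:
  fixes G :: "('g,'m) monoid_scheme" (structure)
  assumes TG: "topological_group G T" and CA: "continuous_action G T X act"
    and TR: "transitive_action G X act" and ON: "omega_narrow G T" and BA: "baire_space X"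
    and x0: "x0 \<in> topspace X" and U: "openin T U" "\<one> \<in> U"
  shows "x0 \<in> X interior_of (X closure_of ((\<lambda>g. act g x0) ` U))"
proof -
  interpret group G using TG unfolding topological_group_def by blast
  have tT: "topspace T = carrier G" using TG unfolding topological_group_def by blast
  have comp: "\<And>a b x. a \<in> carrier G \<Longrightarrow> b \<in> carrier G \<Longrightarrow> x \<in> topspace X \<Longrightarrow> act (a \<otimes> b) x = act a (act b x)"
    and one: "\<And>x. x \<in> topspace X \<Longrightarrow> act \<one> x = x"
    and into: "\<And>g x. g \<in> carrier G \<Longrightarrow> x \<in> topspace X \<Longrightarrow> act g x \<in> topspace X"
    using CA unfolding continuous_action_def by simp_all
  obtain V where V: "openin T V" "\<one> \<in> V" "\<forall>a\<in>V. \<forall>b\<in>V. inv a \<otimes> b \<in> U"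
    using nbhd_invmult[OF TG U] by (elim exE conjE)
  have Vc: "V \<subseteq> carrier G" using openin_subset[OF V(1)] tT by simp
  have Uc: "U \<subseteq> carrier G" using openin_subset[OF U(1)] tT by simp
  have "\<exists>A. countable A \<and> A \<subseteq> carrier G \<and> A <#> V = carrier G"
    using ON V(1,2) unfolding omega_narrow_def by simp
  then obtain A where A: "countable A" "A \<subseteq> carrier G" "A <#> V = carrier G"
    by (elim exE conjE)
  define Orb where "Orb = (\<lambda>g. act g x0) ` V"
  have Osub: "Orb \<subseteq> topspace X" unfolding Orb_def by (rule image_subsetI) (rule into[OF subsetD[OF Vc] x0])
  define F where "F a = X closure_of (act a ` Orb)" for a
  have aOsub: "act a ` Orb \<subseteq> topspace X" if "a \<in> carrier G" for a
    by (rule image_subsetI) (rule into[OF that subsetD[OF Osub]])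
  have cover: "\<exists>a\<in>A. y \<in> F a" if y: "y \<in> topspace X" for y
  proof -
    obtain g where g: "g \<in> carrier G" "act g x0 = y" using TR x0 y unfolding transitive_action_def by blast
    then have "g \<in> A <#> V" using A(3) by simp
    then obtain a v where av: "a \<in> A" "v \<in> V" "g = a \<otimes> v" unfolding set_mult_def by blast
    have ac: "a \<in> carrier G" using av(1) A(2) by blast
    have vc: "v \<in> carrier G" using av(2) Vc by blast
    have "y = act a (act v x0)" using g av comp[OF ac vc x0] by simp
    then have "y \<in> act a ` Orb" using av(2) unfolding Orb_def by blast
    then have "y \<in> F a" unfolding F_def using closure_of_subset[OF aOsub[OF ac]] by blast
    then show ?thesis using av(1) by blast
  qed
  have "\<exists>a\<in>A. X interior_of F a \<noteq> {}"
  proof (rule ccontr)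
    assume "\<not> (\<exists>a\<in>A. X interior_of F a \<noteq> {})"
    then have emp: "\<And>a. a \<in> A \<Longrightarrow> X interior_of F a = {}" by blast
    define \<U> where "\<U> = (\<lambda>a. topspace X - F a) ` A"
    have "countable \<U>" unfolding \<U>_def using A(1) by simp
    moreover have "\<forall>W\<in>\<U>. openin X W \<and> X closure_of W = topspace X"
    proof
      fix W assume "W \<in> \<U>"
      then obtain a where a: "a \<in> A" "W = topspace X - F a" unfolding \<U>_def by blast
      have "closedin X (F a)" unfolding F_def by simp
      then have "openin X W" using a(2) by (simp add: openin_diff)
      moreover have "X closure_of W = topspace X"
        using a closure_of_complement[of X "F a"] emp[OF a(1)] by simp
      ultimately show "openin X W \<and> X closure_of W = topspace X" by blast
    qed
    ultimately have "X closure_of (topspace X \<inter> \<Inter>\<U>) = topspace X"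
      using BA unfolding baire_space_def by blast
    moreover have "topspace X \<inter> \<Inter>\<U> = {}"
    proof (rule equals0I)
      fix y assume y: "y \<in> topspace X \<inter> \<Inter>\<U>"
      then obtain a where "a \<in> A" "y \<in> F a" using cover by blast
      moreover have "topspace X - F a \<in> \<U>" unfolding \<U>_def using \<open>a \<in> A\<close> by blast
      ultimately show False using y by blast
    qed
    ultimately show False using x0 by simp
  qed
  then obtain a where aA: "a \<in> A" and Wne: "X interior_of F a \<noteq> {}" by blast
  define W where "W = X interior_of F a"
  have ac: "a \<in> carrier G" using aA A(2) by blast
  have Wo: "openin X W" unfolding W_def by simp
  have WF: "W \<subseteq> F a" unfolding W_def by (rule interior_of_subset)
  have "W \<inter> act a ` Orb \<noteq> {}"
  proof
    assume "W \<inter> act a ` Orb = {}"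
    then have "W \<inter> F a = {}" unfolding F_def using openin_Int_closure_of_eq_empty[OF Wo] by simp
    then show False using WF Wne W_def by blast
  qed
  then obtain v where v: "v \<in> V" "act a (act v x0) \<in> W" unfolding Orb_def by blast
  have vc: "v \<in> carrier G" using v(1) Vc by blast
  define h where "h = inv (a \<otimes> v)"
  have hc: "h \<in> carrier G" unfolding h_def using ac vc by simp
  have hom: "homeomorphic_map X X (act h)" by (rule act_homeo[OF CA TG hc])
  have Wsub: "W \<subseteq> topspace X" using Wo by (rule openin_subset)
  have Ho: "openin X (act h ` W)" using homeomorphic_map_openness[OF hom Wsub] Wo by simp
  have "act h (act a (act v x0)) = act (h \<otimes> (a \<otimes> v)) x0"
    using comp[OF ac vc x0] comp[OF hc _ x0, of "a \<otimes> v"] ac vc by simp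
  also have "\<dots> = x0" unfolding h_def using ac vc one[OF x0] by simp
  finally have x0H: "x0 \<in> act h ` W" using v(2) by (metis imageI)
  have "act h ` W \<subseteq> act h ` F a" using WF by (rule image_mono)
  also have "\<dots> = X closure_of (act h ` act a ` Orb)"
    unfolding F_def using homeomorphic_map_closure_of[OF hom aOsub[OF ac]] by simp
  also have "\<dots> \<subseteq> X closure_of ((\<lambda>g. act g x0) ` U)"
  proof (rule closure_of_mono)
    show "act h ` act a ` Orb \<subseteq> (\<lambda>g. act g x0) ` U"
    proof
      fix z assume "z \<in> act h ` act a ` Orb"
      then obtain w where w: "w \<in> V" "z = act h (act a (act w x0))" unfolding Orb_def by blast
      have wc: "w \<in> carrier G" using w(1) Vc by blast
      have "z = act (h \<otimes> (a \<otimes> w)) x0"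
        using w(2) comp[OF ac wc x0] comp[OF hc _ x0, of "a \<otimes> w"] ac wc by simp
      also have "h \<otimes> (a \<otimes> w) = inv v \<otimes> w"
        unfolding h_def using ac vc wc by (simp add: inv_mult_group m_assoc[symmetric]) (simp add: m_assoc)
      finally have "z = act (inv v \<otimes> w) x0" .
      moreover have "inv v \<otimes> w \<in> U" using V(3) v(1) w(1) by blast
      ultimately show "z \<in> (\<lambda>g. act g x0) ` U" by blast
    qed
  qed
  finally have "act h ` W \<subseteq> X closure_of ((\<lambda>g. act g x0) ` U)" .
  then have "act h ` W \<subseteq> X interior_of (X closure_of ((\<lambda>g. act g x0) ` U))"
    using Ho by (rule interior_of_maximal)
  then show ?thesis using x0H by blast
qed


lemma orbit_cont:
  fixes G :: "('g,'m) monoid_scheme" (structure)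
  assumes CA: "continuous_action G T X act" and x0: "x0 \<in> topspace X"
  shows "continuous_map T X (\<lambda>g. act g x0)"
proof -
  have c: "continuous_map (prod_topology T X) X (\<lambda>(g, x). act g x)"
    using CA unfolding continuous_action_def by simp
  have p: "continuous_map T (prod_topology T X) (\<lambda>g. (g, x0))"
    by (intro continuous_map_pairedI continuous_map_id[unfolded id_def]) (simp add: x0)
  have "continuous_map T X ((\<lambda>(g, x). act g x) \<circ> (\<lambda>g. (g, x0)))"
    using continuous_map_compose[OF p c] .
  then show ?thesis by (simp add: o_def)
qed

lemma sc_main:
  fixes G :: "('g,'m) monoid_scheme" (structure)
  assumes TG: "topological_group G T" and CA: "continuous_action G T X act"
    and TR: "transitive_action G X act" and ON: "omega_narrow G T" and BA: "baire_space X"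
    and R: "regular_space X" and FC: "first_countable X" and x0: "x0 \<in> topspace X"
  shows "second_countable X"
proof -
  interpret group G using TG unfolding topological_group_def by simp
  have tT: "topspace T = carrier G" using TG unfolding topological_group_def by simp
  have comp: "\<And>a b x. a \<in> carrier G \<Longrightarrow> b \<in> carrier G \<Longrightarrow> x \<in> topspace X \<Longrightarrow> act (a \<otimes> b) x = act a (act b x)"
    and one: "\<And>x. x \<in> topspace X \<Longrightarrow> act \<one> x = x"
    and into: "\<And>g x. g \<in> carrier G \<Longrightarrow> x \<in> topspace X \<Longrightarrow> act g x \<in> topspace X"
    using CA unfolding continuous_action_def by simp_all
  have psi: "continuous_map T X (\<lambda>g. act g x0)" by (rule orbit_cont[OF CA x0])
  have "\<exists>\<B>. countable \<B> \<and> (\<forall>V \<in> \<B>. openin X V) \<and>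
             (\<forall>U. openin X U \<and> x0 \<in> U \<longrightarrow> (\<exists>V \<in> \<B>. x0 \<in> V \<and> V \<subseteq> U))"
    using FC x0 unfolding first_countable_def by simp
  then obtain \<B>0 where B0: "countable \<B>0" "\<forall>V \<in> \<B>0. openin X V"
      "\<forall>U. openin X U \<and> x0 \<in> U \<longrightarrow> (\<exists>V \<in> \<B>0. x0 \<in> V \<and> V \<subseteq> U)"
    by (elim exE conjE)
  define \<B>1 where "\<B>1 = {B \<in> \<B>0. x0 \<in> B}"
  have B1c: "countable \<B>1" unfolding \<B>1_def using B0(1) by simp
  define P where "P B U \<longleftrightarrow> openin T U \<and> \<one> \<in> U \<and> (\<exists>W. openin X W \<and> X closure_of W \<subseteq> B \<and>
      (\<forall>u1\<in>U. \<forall>u2\<in>U. \<forall>u3\<in>U. act (inv u1 \<otimes> (u2 \<otimes> u3)) x0 \<in> W))" for B U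
  have exP: "\<exists>U. P B U" if B: "B \<in> \<B>1" for B
  proof -
    have Bo: "openin X B" and xB: "x0 \<in> B" using B B0(2) unfolding \<B>1_def by auto
    have "closedin X (topspace X - B)" by (intro closedin_diff closedin_topspace Bo)
    moreover have "x0 \<in> topspace X - (topspace X - B)" using x0 xB by simp
    ultimately obtain W where W: "openin X W" "x0 \<in> W" "disjnt (topspace X - B) (X closure_of W)"
      using R unfolding regular_space by (metis (no_types, lifting))
    have clW: "X closure_of W \<subseteq> B"
    proof
      fix z assume "z \<in> X closure_of W"
      then have "z \<in> topspace X" using closure_of_subset_topspace[of X W] by auto
      with \<open>z \<in> X closure_of W\<close> W(3) show "z \<in> B" by (auto simp: disjnt_def)
    qed
    define N where "N = {g \<in> topspace T. act g x0 \<in> W}"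
    have No: "openin T N" unfolding N_def by (rule openin_continuous_map_preimage[OF psi W(1)])
    have N1: "\<one> \<in> N" unfolding N_def using tT one[OF x0] W(2) by simp
    obtain U1 where U1: "openin T U1" "\<one> \<in> U1" "\<forall>a\<in>U1. \<forall>b\<in>U1. inv a \<otimes> b \<in> N"
      using nbhd_invmult[OF TG No N1] by (elim exE conjE)
    obtain U2 where U2: "openin T U2" "\<one> \<in> U2" "\<forall>a\<in>U2. \<forall>b\<in>U2. a \<otimes> b \<in> U1"
      using nbhd_mult[OF TG U1(1,2)] by (elim exE conjE)
    have "P B (U1 \<inter> U2)"
      unfolding P_def
    proof (intro conjI exI ballI)
      show "openin T (U1 \<inter> U2)" using U1(1) U2(1) by (rule openin_Int)
      show "\<one> \<in> U1 \<inter> U2" using U1(2) U2(2) by simp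
      show "openin X W" by (rule W(1))
      show "X closure_of W \<subseteq> B" by (rule clW)
      fix u1 u2 u3 assume u: "u1 \<in> U1 \<inter> U2" "u2 \<in> U1 \<inter> U2" "u3 \<in> U1 \<inter> U2"
      have "u2 \<otimes> u3 \<in> U1" using U2(3) u(2,3) by simp
      then have "inv u1 \<otimes> (u2 \<otimes> u3) \<in> N" using U1(3) u(1) by simp
      then show "act (inv u1 \<otimes> (u2 \<otimes> u3)) x0 \<in> W" unfolding N_def by simp
    qed
    then show ?thesis by (rule exI)
  qed
  have "\<forall>B\<in>\<B>1. \<exists>U. P B U" using exP by simp
  then have "\<exists>Uf. \<forall>B\<in>\<B>1. P B (Uf B)" by (rule bchoice)
  then obtain Uf where Uf: "\<forall>B\<in>\<B>1. P B (Uf B)" by (elim exE)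
  have Ufc: "Uf B \<subseteq> carrier G" if "B \<in> \<B>1" for B
    using Uf that openin_subset tT unfolding P_def by metis
  have "\<forall>B\<in>\<B>1. \<exists>A. countable A \<and> A \<subseteq> carrier G \<and> A <#> Uf B = carrier G"
  proof
    fix B assume "B \<in> \<B>1"
    then have "openin T (Uf B)" "\<one> \<in> Uf B" using Uf unfolding P_def by auto
    then show "\<exists>A. countable A \<and> A \<subseteq> carrier G \<and> A <#> Uf B = carrier G"
      using ON unfolding omega_narrow_def by simp
  qed
  then have "\<exists>Af. \<forall>B\<in>\<B>1. countable (Af B) \<and> Af B \<subseteq> carrier G \<and> Af B <#> Uf B = carrier G"
    by (rule bchoice)
  then obtain Af where Af: "\<forall>B\<in>\<B>1. countable (Af B) \<and> Af B \<subseteq> carrier G \<and> Af B <#> Uf B = carrier G"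
    by (elim exE)
  define J where "J B = X interior_of (X closure_of ((\<lambda>g. act g x0) ` (Uf B <#> Uf B)))" for B
  define D where "D B a = act a ` J B" for B a
  define \<B> where "\<B> = (\<lambda>(B, a). D B a) ` (SIGMA B:\<B>1. Af B)"
  show ?thesis
    unfolding second_countable_def
  proof (intro exI conjI allI impI ballI)
    show "countable \<B>" unfolding \<B>_def
      by (intro countable_image countable_SIGMA B1c) (use Af in simp)
  next
    fix V assume "V \<in> \<B>"
    then obtain B a where Ba: "B \<in> \<B>1" "a \<in> Af B" "V = D B a" unfolding \<B>_def by auto
    have ac: "a \<in> carrier G" using Af Ba(1,2) by auto
    have "openin X (act a ` J B)"
      using homeomorphic_map_openness[OF act_homeo[OF CA TG ac] interior_of_subset_topspace]
      unfolding J_def by simp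
    then show "openin X V" using Ba(3) unfolding D_def by simp
  next
    fix Ob y assume Oy: "openin X Ob \<and> y \<in> Ob"
    then have yX: "y \<in> topspace X" using openin_subset by auto
    obtain g where g: "g \<in> carrier G" "act g x0 = y"
      using TR x0 yX unfolding transitive_action_def by auto
    define Q' where "Q' = {b \<in> topspace X. act g b \<in> Ob}"
    have Q'o: "openin X Q'" unfolding Q'_def
      using Oy openin_continuous_map_preimage[OF act_cont[OF CA TG g(1)]] by auto
    have xQ': "x0 \<in> Q'" unfolding Q'_def using x0 g Oy by auto
    obtain B where B: "B \<in> \<B>0" "x0 \<in> B" "B \<subseteq> Q'" using B0(3) Q'o xQ' by auto
    have B1: "B \<in> \<B>1" unfolding \<B>1_def using B by simp
    define U where "U = Uf B"
    have PU: "P B U" using Uf B1 unfolding U_def by simp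
    then have Uo: "openin T U" and U1: "\<one> \<in> U" unfolding P_def by auto
    obtain W where W: "openin X W" "X closure_of W \<subseteq> B"
       "\<forall>u1\<in>U. \<forall>u2\<in>U. \<forall>u3\<in>U. act (inv u1 \<otimes> (u2 \<otimes> u3)) x0 \<in> W"
      using PU unfolding P_def by (elim conjE exE)
    have Uc: "U \<subseteq> carrier G" using Ufc[OF B1] unfolding U_def .
    have "g \<in> Af B <#> U" using Af B1 g(1) unfolding U_def by auto
    then obtain a u where au: "a \<in> Af B" "u \<in> U" "g = a \<otimes> u" unfolding set_mult_def by auto
    have ac: "a \<in> carrier G" using Af B1 au(1) by auto
    have uc: "u \<in> carrier G" using au(2) Uc by auto
    define S where "S = U <#> U"
    have Sc: "S \<subseteq> carrier G" unfolding S_def set_mult_def using Uc by auto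
    have orbS: "(\<lambda>g. act g x0) ` S \<subseteq> topspace X" using Sc into x0 by auto
    have orbU: "(\<lambda>g. act g x0) ` U \<subseteq> topspace X" using Uc into x0 by auto
    have x0I: "x0 \<in> X interior_of (X closure_of ((\<lambda>g. act g x0) ` U))"
      by (rule effros[OF TG CA TR ON BA x0 Uo U1])
    have homu: "homeomorphic_map X X (act u)" by (rule act_homeo[OF CA TG uc])
    have "act u ` (X interior_of (X closure_of ((\<lambda>g. act g x0) ` U))) \<subseteq> X interior_of (X closure_of ((\<lambda>g. act g x0) ` S))"
    proof (rule interior_of_maximal)
      show "openin X (act u ` (X interior_of (X closure_of ((\<lambda>g. act g x0) ` U))))"
        using homeomorphic_map_openness[OF homu interior_of_subset_topspace] by simp
      have "act u ` (X interior_of (X closure_of ((\<lambda>g. act g x0) ` U))) \<subseteq> act u ` (X closure_of ((\<lambda>g. act g x0) ` U))"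
        by (rule image_mono[OF interior_of_subset])
      also have "\<dots> = X closure_of (act u ` (\<lambda>g. act g x0) ` U)"
        using homeomorphic_map_closure_of[OF homu orbU] by simp
      also have "\<dots> \<subseteq> X closure_of ((\<lambda>g. act g x0) ` S)"
      proof (rule closure_of_mono, rule subsetI)
        fix z assume "z \<in> act u ` (\<lambda>g. act g x0) ` U"
        then obtain w where w: "w \<in> U" "z = act u (act w x0)" by auto
        have wc: "w \<in> carrier G" using w(1) Uc by auto
        have "z = act (u \<otimes> w) x0" using w(2) comp[OF uc wc x0] by simp
        moreover have "u \<otimes> w \<in> S" unfolding S_def set_mult_def using au(2) w(1) by auto
        ultimately show "z \<in> (\<lambda>g. act g x0) ` S" by auto
      qed
      finally show "act u ` (X interior_of (X closure_of ((\<lambda>g. act g x0) ` U))) \<subseteq> X closure_of ((\<lambda>g. act g x0) ` S)" .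
    qed
    then have uJ: "act u x0 \<in> J B" using x0I unfolding J_def S_def U_def by auto
    have yD: "y \<in> D B a" unfolding D_def using uJ g au comp[OF ac uc x0] by auto
    have DO: "D B a \<subseteq> Ob"
    proof
      fix z' assume "z' \<in> D B a"
      then obtain z where z: "z \<in> J B" "z' = act a z" unfolding D_def by auto
      have zcl: "z \<in> X closure_of ((\<lambda>g. act g x0) ` S)"
        using z(1) unfolding J_def S_def U_def by (meson interior_of_subset subsetD)
      have zX: "z \<in> topspace X" using zcl by (meson closure_of_subset_topspace subsetD)
      have iuc: "inv u \<in> carrier G" using uc by simp
      have homi: "homeomorphic_map X X (act (inv u))" by (rule act_homeo[OF CA TG iuc])
      have "act (inv u) z \<in> act (inv u) ` (X closure_of ((\<lambda>g. act g x0) ` S))" using zcl by simp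
      also have "\<dots> = X closure_of (act (inv u) ` (\<lambda>g. act g x0) ` S)"
        using homeomorphic_map_closure_of[OF homi orbS] by simp
      also have "\<dots> \<subseteq> X closure_of W"
      proof (rule closure_of_mono, rule subsetI)
        fix q assume "q \<in> act (inv u) ` (\<lambda>g. act g x0) ` S"
        then obtain s where s: "s \<in> S" "q = act (inv u) (act s x0)" by auto
        obtain u2 u3 where u23: "u2 \<in> U" "u3 \<in> U" "s = u2 \<otimes> u3"
          using s(1) unfolding S_def set_mult_def by auto
        have sc: "s \<in> carrier G" using s(1) Sc by auto
        have "q = act (inv u \<otimes> (u2 \<otimes> u3)) x0" using s(2) u23(3) comp[OF iuc sc x0] by simp
        then show "q \<in> W" using W(3) au(2) u23(1,2) by simp
      qed
      also have "\<dots> \<subseteq> Q'" using W(2) B(3) by auto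
      finally have "act (inv u) z \<in> Q'" .
      then have "act g (act (inv u) z) \<in> Ob" unfolding Q'_def by simp
      moreover have "act g (act (inv u) z) = act a z"
      proof -
        have "act g (act (inv u) z) = act (g \<otimes> inv u) z" using comp[OF g(1) iuc zX] by simp
        also have "g \<otimes> inv u = a" using au(3) ac uc by (simp add: m_assoc)
        finally show ?thesis .
      qed
      ultimately show "z' \<in> Ob" using z(2) by simp
    qed
    have "D B a \<in> \<B>" unfolding \<B>_def using B1 au(1) by auto
    then show "\<exists>V\<in>\<B>. y \<in> V \<and> V \<subseteq> Ob" using yD DO by auto
  qed
qed


theorem corollary4p12:
  fixes X :: "'a topology" and G :: "('g, 'm) monoid_scheme" and T :: "'g topology"
    and act :: "'g \<Rightarrow> 'a \<Rightarrow> 'a"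
  assumes "tychonoff_space X"
    and "homogeneous_space X"
    and "baire_space X"
    and "first_countable X"
    and "topological_group G T"
    and "tychonoff_space T"
    and "omega_narrow G T"
    and "continuous_action G T X act"
    and "transitive_action G X act"
  shows "separable_space X \<and> metrizable_space X"
proof -
  have R: "regular_space X" using assms(1) unfolding tychonoff_space_def
    by (simp add: completely_regular_imp_regular_space)
  have H: "Hausdorff_space X" using assms(1) unfolding tychonoff_space_def by simp
  have SC: "second_countable X"
  proof (cases "topspace X = {}")
    case True
    show ?thesis unfolding second_countable_def
    proof (intro exI[of _ "{}"] conjI allI impI)
      fix U x assume "openin X U \<and> x \<in> U"
      then have "x \<in> topspace X" using openin_subset by auto
      then show "\<exists>V\<in>{}. x \<in> V \<and> V \<subseteq> U" using True by simp
    qed auto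
  next
    case False
    then obtain x0 where "x0 \<in> topspace X" by (meson ex_in_conv)
    then show ?thesis
      by (rule sc_main[OF assms(5) assms(8) assms(9) assms(7) assms(3) R assms(4)])
  qed
  show ?thesis
    using second_countable_imp_separable_space[OF SC] regular_second_countable_metrizable[OF R H SC]
    by simp
qed

end
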